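(* Let $n\ge2$, $q\in\mathbb C$ a primitive $n$-th root of unity, and $u_q(sl_2)$ the $\mathbb C$-algebra with generators $K,E,F$ and relations $K^n=1$, $E^n=F^n=0$, $EK=qKE$, $FK=q^{-1}KF$, $EF-FE=\frac{K-K^{-1}}{q-q^{-1}}$, with basis $\{K^iF^jE^k:0\le i,j,k\le n-1\}$. Let $\int$ be the linear functional with $\int KF^{n-1}E^{n-1}=1$ and $\int$ zero on all other basis monomials. Then $(h,g):=\int Khg$ is a symmetric Frobenius form on $u_q(sl_2)$.
   Context: A Frobenius form on an algebra $A$ is a bilinear form $(\ ,\ )$ with $(ab,c)=(a,bc)$ for all $a,b,c$ whose induced map $A\to A^*$, $a\mapsto(a,\ )$, is invertible; it is symmetric if $(a,b)=(b,a)$ for all $a,b$. *)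

theory Defs
  imports Complex_Main
begin

definition complex_algebra :: "(complex \<Rightarrow> 'a::ring_1 \<Rightarrow> 'a) \<Rightarrow> bool" where
  "complex_algebra scl \<longleftrightarrow> vector_space scl \<and>
     (\<forall>c a b. scl c (a * b) = scl c a * b \<and> scl c (a * b) = a * scl c b)"

definition frobenius_form ::
  "(complex \<Rightarrow> 'a::ring_1 \<Rightarrow> 'a) \<Rightarrow> ('a \<Rightarrow> 'a \<Rightarrow> complex) \<Rightarrow> bool" where
  "frobenius_form scl B \<longleftrightarrow>
     (\<forall>a. Vector_Spaces.linear scl (*) (B a)) \<and>
     (\<forall>b. Vector_Spaces.linear scl (*) (\<lambda>a. B a b)) \<and>
     (\<forall>a b c. B (a * b) c = B a (b * c)) \<and>
     bij_betw B UNIV {f. Vector_Spaces.linear scl (*) f}"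

definition symmetric_form :: "('a \<Rightarrow> 'a \<Rightarrow> complex) \<Rightarrow> bool" where
  "symmetric_form B \<longleftrightarrow> (\<forall>a b. B a b = B b a)"

definition primitive_root_of_unity :: "nat \<Rightarrow> complex \<Rightarrow> bool" where
  "primitive_root_of_unity n q \<longleftrightarrow> q ^ n = 1 \<and> (\<forall>k. 0 < k \<and> k < n \<longrightarrow> q ^ k \<noteq> 1)"

end

theory Submission imports Defs begin

locale uq =
  fixes n :: nat and q :: complex
    and scl :: "complex \<Rightarrow> 'a::ring_1 \<Rightarrow> 'a"
    and K E F :: 'a
    and intg :: "'a \<Rightarrow> complex"
  assumes n2: "n \<ge> 2"
    and prim: "primitive_root_of_unity n q"
    and alg: "complex_algebra scl"
    and relK: "K ^ n = 1"
    and relE: "E ^ n = 0"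
    and relF: "F ^ n = 0"
    and relEK: "E * K = scl q (K * E)"
    and relFK: "F * K = scl (inverse q) (K * F)"
    and relEF: "E * F - F * E = scl (1 / (q - inverse q)) (K - K ^ (n - 1))"
    and basis_inj: "inj_on (\<lambda>(i, j, k). K ^ i * F ^ j * E ^ k) ({..<n} \<times> {..<n} \<times> {..<n})"
    and basis_span: "module.span scl ((\<lambda>(i, j, k). K ^ i * F ^ j * E ^ k) ` ({..<n} \<times> {..<n} \<times> {..<n})) = UNIV"
    and intg_lin: "Vector_Spaces.linear scl (*) intg"
    and intg_basis: "\<And>i j k. i < n \<Longrightarrow> j < n \<Longrightarrow> k < n \<Longrightarrow>
        intg (K ^ i * F ^ j * E ^ k) = (if i = 1 \<and> j = n - 1 \<and> k = n - 1 then 1 else 0)"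
begin

lemma vs: "vector_space scl" using alg unfolding complex_algebra_def by blast

sublocale vs: vector_space scl by (rule vs)

lemma sc_out[simp]: "scl c a * b = scl c (a*b)" "a * scl c b = scl c (a*b)"
  using alg unfolding complex_algebra_def by metis+

lemma intg_add: "intg (x+y) = intg x + intg y"
  using intg_lin by (simp add: Vector_Spaces.linear_iff)
lemma intg_scl: "intg (scl c x) = c * intg x"
  using intg_lin by (simp add: Vector_Spaces.linear_iff)

lemma cvs: "vector_space ((*) :: complex \<Rightarrow> complex \<Rightarrow> complex)"
  using intg_lin by (simp add: Vector_Spaces.linear_iff)

lemma qn: "q ^ n = 1" using prim unfolding primitive_root_of_unity_def by blast

lemma q0: "q \<noteq> 0" using qn n2 by (cases "q = 0") (auto simp: power_0_left)

lemma iqn: "inverse q ^ n = 1" using qn by (simp add: power_inverse)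

lemma pow_mod: "(x::'b::monoid_mult) ^ n = 1 \<Longrightarrow> x ^ m = x ^ (m mod n)"
proof -
  assume h: "x ^ n = 1"
  have "x ^ m = x ^ (n * (m div n) + m mod n)" by simp
  also have "\<dots> = (x ^ n) ^ (m div n) * x ^ (m mod n)" by (simp only: power_add power_mult)
  finally show ?thesis using h by simp
qed

lemma F_high: "n \<le> j \<Longrightarrow> F ^ j = 0"
proof -
  assume "n \<le> j" then have "F ^ j = F ^ n * F ^ (j - n)" by (simp add: power_add[symmetric])
  then show ?thesis using relF by simp
qed

lemma E_high: "n \<le> j \<Longrightarrow> E ^ j = 0"
proof -
  assume "n \<le> j" then have "E ^ j = E ^ n * E ^ (j - n)" by (simp add: power_add[symmetric])
  then show ?thesis using relE by simp
qed

lemma intg_zero: "intg 0 = 0" using intg_scl[of 0 0] by simp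

definition phi where "phi x = intg (K * x)"

lemma phi_add: "phi (x+y) = phi x + phi y" and phi_scl: "phi (scl c x) = c * phi x"
  unfolding phi_def by (simp_all add: distrib_left intg_add intg_scl)

lemma phi_mono: "phi (K^m * F^j * E^k) = (if m mod n = 0 \<and> j = n - 1 \<and> k = n - 1 then 1 else 0)"
proof (cases "j < n \<and> k < n")
  case True
  have "phi (K^m * F^j * E^k) = intg (K^(Suc m) * F^j * E^k)"
    unfolding phi_def by (simp add: mult.assoc)
  also have "\<dots> = intg (K^(Suc m mod n) * F^j * E^k)"
    using pow_mod[OF relK, of "Suc m"] by simp
  also have "\<dots> = (if Suc m mod n = 1 \<and> j = n - 1 \<and> k = n - 1 then 1 else 0)"
    using True n2 by (intro intg_basis) auto
  also have "(Suc m mod n = 1) = (m mod n = 0)"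
    using n2 by (auto simp: mod_Suc)
  finally show ?thesis .
next
  case False
  then have "F^j = 0 \<or> E^k = 0" using F_high E_high by force
  then show ?thesis using False n2 unfolding phi_def by (auto simp: intg_zero)
qed

lemma EK: "E^k * K = scl (q^k) (K * E^k)"
proof (induction k)
  case 0 show ?case by simp
next
  case (Suc k)
  have "E^(Suc k) * K = E * (E^k * K)" by (simp add: mult.assoc)
  also have "\<dots> = scl (q^k) ((E * K) * E^k)" using Suc by (simp add: mult.assoc)
  also have "\<dots> = scl (q^Suc k) (K * E^Suc k)" by (simp add: relEK mult.assoc mult.commute)
  finally show ?case .
qed

lemma FK: "F^k * K = scl (inverse q^k) (K * F^k)"
proof (induction k)
  case 0 show ?case by simp
next
  case (Suc k)
  have "F^(Suc k) * K = F * (F^k * K)" by (simp add: mult.assoc)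
  also have "\<dots> = scl (inverse q^k) ((F * K) * F^k)" using Suc by (simp add: mult.assoc)
  also have "\<dots> = scl (inverse q^Suc k) (K * F^Suc k)" by (simp add: relFK mult.assoc mult.commute)
  finally show ?case .
qed

lemma EKp: "E^k * K^a = scl (q^(k*a)) (K^a * E^k)"
proof (induction a)
  case 0 show ?case by simp
next
  case (Suc a)
  have "E^k * K^(Suc a) = (E^k * K^a) * K" by (simp add: mult.assoc power_Suc2 del: power_Suc)
  also have "\<dots> = scl (q^(k*a)) (K^a * (E^k * K))" using Suc by (simp add: mult.assoc)
  also have "\<dots> = scl (q^(k*a) * q^k) (K^a * K * E^k)" by (simp add: EK mult.assoc)
  also have "q^(k*a) * q^k = q^(k*Suc a)" by (simp add: power_add mult.commute)
  also have "K^a * K = K^Suc a" by (rule power_Suc2[symmetric])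
  finally show ?case .
qed

lemma FKp: "F^k * K^a = scl (inverse q^(k*a)) (K^a * F^k)"
proof (induction a)
  case 0 show ?case by simp
next
  case (Suc a)
  have "F^k * K^(Suc a) = (F^k * K^a) * K" by (simp add: mult.assoc power_Suc2 del: power_Suc)
  also have "\<dots> = scl (inverse q^(k*a)) (K^a * (F^k * K))" using Suc by (simp add: mult.assoc)
  also have "\<dots> = scl (inverse q^(k*a) * inverse q^k) (K^a * K * F^k)" by (simp add: FK mult.assoc)
  also have "inverse q^(k*a) * inverse q^k = inverse q^(k*Suc a)" by (simp add: power_add mult.commute)
  also have "K^a * K = K^Suc a" by (rule power_Suc2[symmetric])
  finally show ?case .
qed

lemma KpF: "K^a * F = scl (q^a) (F * K^a)"
proof -
  have "scl (q^a) (F * K^a) = scl (q^a * inverse q ^ a) (K^a * F)"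
    using FKp[of 1 a] by simp
  also have "q^a * inverse q ^ a = 1" using q0 by (simp add: power_inverse)
  finally show ?thesis by simp
qed

definition Ksp where "Ksp = vs.span (range (\<lambda>a. K^a))"

lemma Ksp_pow: "K^a \<in> Ksp" unfolding Ksp_def by (intro vs.span_base) auto

lemma E_Ksp: "p \<in> Ksp \<Longrightarrow> \<exists>p'\<in>Ksp. E * p = p' * E"
  unfolding Ksp_def
proof (induction p rule: vs.span_induct_alt)
  case base show ?case by (intro bexI[of _ 0]) (auto intro: vs.span_zero)
next
  case (step c x y)
  then obtain a where x: "x = K^a" by auto
  from step obtain p' where p': "p' \<in> vs.span (range (\<lambda>a. K^a))" "E * y = p' * E" by auto
  have "E * (scl c x + y) = (scl (c * q^a) (K^a) + p') * E"
    using p' EKp[of 1 a] by (simp add: x distrib_left distrib_right)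
  moreover have "scl (c * q^a) (K^a) + p' \<in> vs.span (range (\<lambda>a. K^a))"
    using p' by (intro vs.span_add vs.span_scale) (auto intro: vs.span_base)
  ultimately show ?case by blast
qed

lemma F_Ksp: "p \<in> Ksp \<Longrightarrow> \<exists>p'\<in>Ksp. p * F = F * p'"
  unfolding Ksp_def
proof (induction p rule: vs.span_induct_alt)
  case base show ?case by (intro bexI[of _ 0]) (auto intro: vs.span_zero)
next
  case (step c x y)
  then obtain a where x: "x = K^a" by auto
  from step obtain p' where p': "p' \<in> vs.span (range (\<lambda>a. K^a))" "y * F = F * p'" by auto
  have "(scl c x + y) * F = F * (scl (c * q^a) (K^a) + p')"
    using p' KpF[of a] by (simp add: x distrib_left distrib_right)
  moreover have "scl (c * q^a) (K^a) + p' \<in> vs.span (range (\<lambda>a. K^a))"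
    using p' by (intro vs.span_add vs.span_scale) (auto intro: vs.span_base)
  ultimately show ?case by blast
qed

definition p0 where "p0 = scl (1 / (q - inverse q)) (K - K ^ (n - 1))"

lemma p0_Ksp: "p0 \<in> Ksp"
  unfolding p0_def using Ksp_pow[of 1] Ksp_pow[of "n-1"] unfolding Ksp_def
  by (intro vs.span_scale vs.span_diff) auto

lemma EF: "E * F = F * E + p0"
  using relEF unfolding p0_def by (simp add: algebra_simps)

lemma Ksp_add: "p \<in> Ksp \<Longrightarrow> p' \<in> Ksp \<Longrightarrow> p + p' \<in> Ksp"
  unfolding Ksp_def by (rule vs.span_add)

lemma phi_zero: "phi 0 = 0" using phi_scl[of 0 0] by simp

lemma q_i: "i mod n = 0 \<Longrightarrow> q^i = 1" using pow_mod[OF qn, of i] by simp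
lemma iq_i: "i mod n = 0 \<Longrightarrow> inverse q^i = 1" using pow_mod[OF iqn, of i] by simp

lemma E_Fpow: "\<exists>p\<in>Ksp. E * F^(Suc j) = F^(Suc j) * E + F^j * p"
proof (induction j)
  case 0 show ?case using EF p0_Ksp by auto
next
  case (Suc j)
  then obtain p where p: "p \<in> Ksp" "E * F^(Suc j) = F^(Suc j) * E + F^j * p" by blast
  obtain p' where p': "p' \<in> Ksp" "p * F = F * p'" using F_Ksp[OF p(1)] by blast
  have "E*F^(Suc (Suc j)) = (E*F^(Suc j))*F" by (simp add: mult.assoc power_Suc2 del: power_Suc)
  also have "\<dots> = F^Suc j*(E*F) + F^j*(p*F)" using p(2) by (simp add: distrib_right mult.assoc power_Suc2 del: power_Suc)
  also have "\<dots> = F^Suc j * (F*E + p0) + F^j * (F * p')" using EF p'(2) by simp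
  also have "\<dots> = F^(Suc (Suc j)) * E + F^(Suc j) * (p0 + p')"
    by (simp add: distrib_left distrib_right mult.assoc power_Suc2 del: power_Suc)
  finally show ?case using Ksp_add[OF p0_Ksp p'(1)] by blast
qed

lemma Epow_F: "\<exists>p\<in>Ksp. E^(Suc k) * F = F * E^(Suc k) + p * E^k"
proof (induction k)
  case 0 show ?case using EF p0_Ksp by auto
next
  case (Suc k)
  then obtain p where p: "p \<in> Ksp" "E^(Suc k) * F = F * E^(Suc k) + p * E^k" by blast
  obtain p' where p': "p' \<in> Ksp" "E * p = p' * E" using E_Ksp[OF p(1)] by blast
  have "E^(Suc (Suc k))*F = E*(E^(Suc k)*F)" by (simp add: mult.assoc)
  also have "\<dots> = (E*F)*E^Suc k + (E*p)*E^k" using p(2) by (simp add: distrib_left mult.assoc)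
  also have "\<dots> = (F*E + p0)*E^Suc k + p'*E*E^k" using EF p'(2) by simp
  also have "\<dots> = F * E^(Suc (Suc k)) + (p0 + p') * E^(Suc k)"
    by (simp add: distrib_left distrib_right mult.assoc)
  finally show ?case using Ksp_add[OF p0_Ksp p'(1)] by blast
qed

lemma vanish: "p \<in> Ksp \<Longrightarrow> j \<noteq> n-1 \<or> k \<noteq> n-1 \<Longrightarrow> phi (K^i * F^j * p * E^k) = 0"
  unfolding Ksp_def
proof (induction p rule: vs.span_induct_alt)
  case base show ?case by (simp add: phi_zero)
next
  case (step c x y)
  then obtain a where x: "x = K^a" by auto
  have "K^i*F^j*K^a*E^k = K^i*(F^j*K^a)*E^k" by (simp add: mult.assoc)
  also have "\<dots> = scl (inverse q^(j*a)) (K^(i+a)*F^j*E^k)" by (simp add: FKp mult.assoc power_add)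
  moreover have "phi (K^(i+a)*F^j*E^k) = 0" using step(3) unfolding phi_mono by auto
  ultimately have "phi (K^i*F^j*K^a*E^k) = 0" by (simp add: phi_scl)
  moreover have "K^i * F^j * (scl c x + y) * E^k = scl c (K^i*F^j*K^a*E^k) + K^i * F^j * y * E^k"
    by (simp add: x distrib_left distrib_right mult.assoc)
  ultimately show ?case using step by (simp add: phi_add phi_scl)
qed

lemma TK: "phi (K^i*F^j*E^k*K) = phi (K*(K^i*F^j*E^k))"
proof -
  have "K^i*F^j*E^k*K = K^i*F^j*(E^k*K)" by (simp add: mult.assoc)
  also have "\<dots> = scl (q^k) (K^i*(F^j*K)*E^k)" by (simp add: EK mult.assoc)
  also have "\<dots> = scl (q^k * inverse q^j) (K^(Suc i)*F^j*E^k)" by (simp add: FK mult.assoc power_Suc2 del: power_Suc)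
  finally have 1: "phi (K^i*F^j*E^k*K) = q^k * inverse q^j * phi (K^(Suc i)*F^j*E^k)" by (simp add: phi_scl)
  have 2: "K*(K^i*F^j*E^k) = K^(Suc i)*F^j*E^k" by (simp add: mult.assoc)
  show ?thesis
  proof (cases "j = n-1 \<and> k = n-1")
    case True
    then have "q^k * inverse q^j = 1" using q0 by (simp add: power_inverse)
    then show ?thesis using 1 2 by simp
  next
    case False
    then have "phi (K^(Suc i)*F^j*E^k) = 0" unfolding phi_mono by auto
    then show ?thesis using 1 2 by simp
  qed
qed

lemma TE: "j < n \<Longrightarrow> phi (K^i*F^j*E^k*E) = phi (E*(K^i*F^j*E^k))"
proof -
  assume jn: "j < n"
  have L: "K^i*F^j*E^k*E = K^i*F^j*E^(Suc k)" by (simp add: mult.assoc power_Suc2 del: power_Suc)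
  have EKi: "E*K^i = scl (q^i) (K^i*E)" using EKp[of 1 i] by simp
  show ?thesis
  proof (cases j)
    case 0
    have "E*(K^i*F^j*E^k) = scl (q^i) (K^i*F^j*E^(Suc k))" using 0 by (simp add: EKi mult.assoc[symmetric])
    moreover have "phi (K^i*F^j*E^(Suc k)) = 0" using 0 n2 unfolding phi_mono by auto
    ultimately show ?thesis using L by (simp add: phi_scl)
  next
    case (Suc j')
    obtain p where p: "p \<in> Ksp" "E * F^(Suc j') = F^(Suc j') * E + F^j' * p" using E_Fpow by blast
    have "E*(K^i*F^j*E^k) = (E*K^i)*F^(Suc j')*E^k" using Suc by (simp add: mult.assoc)
    also have "\<dots> = scl (q^i) (K^i*(E*F^(Suc j'))*E^k)" by (simp add: EKi mult.assoc)
    also have "\<dots> = scl (q^i) (K^i*F^j*E^(Suc k) + K^i*F^j'*p*E^k)"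
      using p(2) Suc by (simp add: distrib_left distrib_right mult.assoc)
    finally have eq: "E*(K^i*F^j*E^k) = scl (q^i) (K^i*F^j*E^(Suc k) + K^i*F^j'*p*E^k)" .
    have "phi (K^i*F^j'*p*E^k) = 0" using Suc jn by (intro vanish[OF p(1)]) auto
    then have "phi (E*(K^i*F^j*E^k)) = q^i * phi (K^i*F^j*E^(Suc k))"
      unfolding eq by (simp only: phi_scl phi_add) simp
    moreover have "i mod n \<noteq> 0 \<Longrightarrow> phi (K^i*F^j*E^(Suc k)) = 0" unfolding phi_mono by auto
    ultimately show ?thesis using L by (cases "i mod n = 0") (auto simp: q_i)
  qed
qed

lemma TF: "k < n \<Longrightarrow> phi (K^i*F^j*E^k*F) = phi (F*(K^i*F^j*E^k))"
proof -
  assume kn: "k < n"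
  have FKi: "F*K^i = scl (inverse q^i) (K^i*F)" using FKp[of 1 i] by simp
  have R: "F*(K^i*F^j*E^k) = scl (inverse q^i) (K^i*F^(Suc j)*E^k)"
    by (simp add: FKi mult.assoc[symmetric])
  have "phi (K^i*F^j*E^k*F) = phi (K^i*F^(Suc j)*E^k)"
  proof (cases k)
    case 0 then show ?thesis by (simp add: mult.assoc power_Suc2 del: power_Suc)
  next
    case (Suc k')
    obtain p where p: "p \<in> Ksp" "E^(Suc k') * F = F * E^(Suc k') + p * E^k'" using Epow_F by blast
    have "K^i*F^j*E^k*F = K^i*F^j*(E^(Suc k')*F)" using Suc by (simp add: mult.assoc)
    also have "\<dots> = K^i*F^(Suc j)*E^k + K^i*F^j*p*E^k'"
      using p(2) Suc by (simp add: distrib_left mult.assoc power_Suc2 del: power_Suc)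
    moreover have "phi (K^i*F^j*p*E^k') = 0" using Suc kn by (intro vanish[OF p(1)]) auto
    ultimately show ?thesis by (simp add: phi_add)
  qed
  moreover have "i mod n \<noteq> 0 \<Longrightarrow> phi (K^i*F^(Suc j)*E^k) = 0" unfolding phi_mono by auto
  ultimately show ?thesis using R by (cases "i mod n = 0") (auto simp: iq_i phi_scl)
qed

definition bas :: "nat \<times> nat \<times> nat \<Rightarrow> 'a" where "bas = (\<lambda>(i, j, k). K ^ i * F ^ j * E ^ k)"
definition II :: "(nat \<times> nat \<times> nat) set" where "II = {..<n} \<times> {..<n} \<times> {..<n}"

lemma bas_simp[simp]: "bas (i,j,k) = K ^ i * F ^ j * E ^ k" by (simp add: bas_def)
lemma fin_II: "finite II" by (simp add: II_def)
lemma span_bas: "vs.span (bas ` II) = UNIV" using basis_span by (simp add: bas_def II_def)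
lemma inj_bas: "inj_on bas II" using basis_inj by (simp add: bas_def II_def)

lemma gen_trace:
  assumes h: "\<And>i j k. i<n \<Longrightarrow> j<n \<Longrightarrow> k<n \<Longrightarrow> phi (K^i*F^j*E^k*y) = phi (y*(K^i*F^j*E^k))"
  shows "phi (x*y) = phi (y*x)"
proof -
  have "x \<in> vs.span (bas ` II)" using span_bas by simp
  then show ?thesis
  proof (induction x rule: vs.span_induct_alt)
    case base show ?case by simp
  next
    case (step c b z)
    then obtain i j k where b: "b = K^i*F^j*E^k" "i<n" "j<n" "k<n" by (auto simp: II_def)
    have "phi ((scl c b + z) * y) = c * phi (b*y) + phi (z*y)" by (simp add: distrib_right phi_add phi_scl)
    also have "\<dots> = c * phi (y*b) + phi (y*z)" using step b h by simp
    also have "\<dots> = phi (y * (scl c b + z))" by (simp add: distrib_left phi_add phi_scl)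
    finally show ?case .
  qed
qed

lemma trK: "phi (x*K) = phi (K*x)" by (rule gen_trace) (rule TK)
lemma trE: "phi (x*E) = phi (E*x)" by (rule gen_trace) (rule TE)
lemma trF: "phi (x*F) = phi (F*x)" by (rule gen_trace) (rule TF)

definition TT where "TT = {y. \<forall>x. phi (x*y) = phi (y*x)}"

lemma TT_mult: "y1 \<in> TT \<Longrightarrow> y2 \<in> TT \<Longrightarrow> y1*y2 \<in> TT"
  unfolding TT_def
proof safe
  fix x assume 1: "\<forall>x. phi (x * y1) = phi (y1 * x)" and 2: "\<forall>x. phi (x * y2) = phi (y2 * x)"
  have "phi (x*(y1*y2)) = phi ((x*y1)*y2)" by (simp add: mult.assoc)
  also have "\<dots> = phi (y2*(x*y1))" using 2 by blast
  also have "\<dots> = phi ((y2*x)*y1)" by (simp add: mult.assoc)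
  also have "\<dots> = phi (y1*(y2*x))" using 1 by blast
  also have "\<dots> = phi ((y1*y2)*x)" by (simp add: mult.assoc)
  finally show "phi (x*(y1*y2)) = phi ((y1*y2)*x)" .
qed

lemma TT_pow: "y \<in> TT \<Longrightarrow> y^k \<in> TT"
proof (induction k)
  case 0 show ?case by (simp add: TT_def)
next
  case (Suc k) then show ?case using TT_mult[of y "y^k"] by simp
qed

lemma trace: "phi (x*y) = phi (y*x)"
proof -
  have "y \<in> vs.span (bas ` II)" using span_bas by simp
  then have "y \<in> TT"
  proof (induction y rule: vs.span_induct_alt)
    case base show ?case by (simp add: TT_def)
  next
    case (step c b z)
    then obtain i j k where b: "b = K^i*F^j*E^k" by (auto simp: II_def)
    have "K \<in> TT" "E \<in> TT" "F \<in> TT" using trK trE trF by (auto simp: TT_def)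
    then have "b \<in> TT" unfolding b by (intro TT_mult TT_pow)
    then show ?case using step(2) unfolding TT_def
      by (simp add: distrib_left distrib_right phi_add phi_scl)
  qed
  then show ?thesis by (simp add: TT_def)
qed

lemma modlem: "i<n \<Longrightarrow> i'<n \<Longrightarrow> ((n - i + i') mod n = 0) = (i' = i)"
proof (cases "i \<le> i'")
  case True
  assume "i<n" "i'<n"
  obtain d where d: "i' = i + d" using True le_Suc_ex by blast
  then have "n - i + i' = d + n" using \<open>i<n\<close> by simp
  then show ?thesis using \<open>i'<n\<close> d by simp
next
  case False
  assume "i<n" "i'<n"
  then show ?thesis using False by simp
qed

lemma phi_LR: "phi (F^a*K^b*(K^i'*F^j'*E^k')*E^c) = inverse q^(a*(b+i')) *
   (if (b+i') mod n = 0 \<and> a+j' = n-1 \<and> k'+c = n-1 then 1 else 0)"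
proof -
  have "F^a*K^b*(K^i'*F^j'*E^k')*E^c = (F^a*K^(b+i'))*F^j'*E^(k'+c)" by (simp add: mult.assoc power_add)
  also have "\<dots> = scl (inverse q^(a*(b+i'))) (K^(b+i')*F^a*F^j'*E^(k'+c))" by (simp only: FKp sc_out)
  also have "\<dots> = scl (inverse q^(a*(b+i'))) (K^(b+i')*F^(a+j')*E^(k'+c))" by (simp add: mult.assoc power_add)
  finally show ?thesis by (simp only: phi_scl phi_mono)
qed

definition dual :: "nat \<times> nat \<times> nat \<Rightarrow> 'a" where
  "dual = (\<lambda>(i, j, k). E^(n-1-k) * (F^(n-1-j) * K^(n-i)))"

lemma pair1: "m \<in> II \<Longrightarrow> m' \<in> II \<Longrightarrow> phi (bas m' * dual m) = (if m' = m then 1 else 0)"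
proof -
  assume m: "m \<in> II" and m': "m' \<in> II"
  obtain i j k where mm: "m = (i,j,k)" by (cases m) auto
  obtain i' j' k' where mm': "m' = (i',j',k')" by (cases m') auto
  have b: "i<n" "j<n" "k<n" "i'<n" "j'<n" "k'<n" using m m' mm mm' by (auto simp: II_def)
  have "phi (bas m' * dual m) = phi ((bas m' * E^(n-1-k)) * (F^(n-1-j) * K^(n-i)))"
    by (simp add: mm dual_def mult.assoc)
  also have "\<dots> = phi ((F^(n-1-j) * K^(n-i)) * (bas m' * E^(n-1-k)))" by (rule trace)
  also have "\<dots> = phi (F^(n-1-j) * K^(n-i) * (K^i'*F^j'*E^k') * E^(n-1-k))" by (simp add: mm' mult.assoc)
  also have "\<dots> = inverse q^((n-1-j)*(n-i+i')) *
     (if (n-i+i') mod n = 0 \<and> (n-1-j)+j' = n-1 \<and> k'+(n-1-k) = n-1 then 1 else 0)"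
    by (rule phi_LR)
  also have "\<dots> = (if m' = m then 1 else 0)"
  proof (cases "m' = m")
    case True
    then have "i' = i" "j' = j" "k' = k" using mm mm' by auto
    moreover have "inverse q^((n-1-j)*n) = 1" by (simp add: power_mult iqn mult.commute[of _ n] power_mult)
    ultimately show ?thesis using True b by simp
  next
    case False
    then have nc: "\<not> ((n-i+i') mod n = 0 \<and> (n-1-j)+j' = n-1 \<and> k'+(n-1-k) = n-1)"
      using modlem[of i i'] b mm mm' by auto
    show ?thesis by (simp only: if_not_P[OF nc] if_not_P[OF False] mult_zero_right)
  qed
  finally show ?thesis .
qed

lemma pair2: "m \<in> II \<Longrightarrow> m' \<in> II \<Longrightarrow> phi (dual m * bas m') = (if m' = m then 1 else 0)"
  using pair1 trace by metis

lemma phi_sum: "finite A \<Longrightarrow> phi (\<Sum>a\<in>A. f a) = (\<Sum>a\<in>A. phi (f a))"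
  by (induction A rule: finite_induct) (auto simp: phi_zero phi_add)

lemma expand: "\<exists>c. x = (\<Sum>m\<in>II. scl (c m) (bas m))"
proof -
  have "x \<in> vs.span (bas ` II)" using span_bas by simp
  then obtain u where "x = (\<Sum>v\<in>bas ` II. scl (u v) v)"
    using vs.span_finite[of "bas ` II"] fin_II by auto
  also have "\<dots> = (\<Sum>m\<in>II. scl (u (bas m)) (bas m))" by (rule sum.reindex[OF inj_bas, unfolded comp_def])
  finally show ?thesis by (intro exI[of _ "\<lambda>m. u (bas m)"])
qed

lemma coeff: "x = (\<Sum>m\<in>II. scl (c m) (bas m)) \<Longrightarrow> m0 \<in> II \<Longrightarrow> phi (x * dual m0) = c m0"
proof -
  assume x: "x = (\<Sum>m\<in>II. scl (c m) (bas m))" and m0: "m0 \<in> II"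
  have "phi (x * dual m0) = (\<Sum>m\<in>II. c m * phi (bas m * dual m0))"
    unfolding x sum_distrib_right by (simp add: phi_sum fin_II phi_scl)
  also have "\<dots> = (\<Sum>m\<in>II. if m = m0 then c m else 0)"
    by (intro sum.cong refl) (simp add: pair1 m0)
  also have "\<dots> = c m0" using m0 fin_II by simp
  finally show ?thesis .
qed

lemma lin1: "Vector_Spaces.linear scl (*) (\<lambda>g. intg (K*a*g))"
  unfolding Vector_Spaces.linear_iff using vs cvs by (simp add: distrib_left intg_add intg_scl)

lemma lin2: "Vector_Spaces.linear scl (*) (\<lambda>a. intg (K*a*b))"
  unfolding Vector_Spaces.linear_iff using vs cvs by (simp add: distrib_left distrib_right intg_add intg_scl)

lemma lin_sum: "Vector_Spaces.linear scl (*) f \<Longrightarrow> finite A \<Longrightarrow>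
    f (\<Sum>m\<in>A. scl (c m) (v m)) = (\<Sum>m\<in>A. c m * f (v m))"
proof -
  assume l: "Vector_Spaces.linear scl (*) f" and A: "finite A"
  have add: "\<And>x y. f (x+y) = f x + f y" and sc: "\<And>c x. f (scl c x) = c * f x"
    using l unfolding Vector_Spaces.linear_iff by auto
  have z: "f 0 = 0" using sc[of 0 0] by simp
  from A show ?thesis by (induction A rule: finite_induct) (simp_all add: z add sc)
qed

lemma main: "frobenius_form scl (\<lambda>h g. intg (K*h*g)) \<and> symmetric_form (\<lambda>h g. intg (K*h*g))"
proof -
  have Bphi: "\<And>h g. intg (K*h*g) = phi (h*g)" by (simp add: phi_def mult.assoc)
  have sym: "symmetric_form (\<lambda>h g. intg (K*h*g))"
    unfolding symmetric_form_def Bphi using trace by simp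
  have inj: "inj (\<lambda>h g. intg (K*h*g))"
  proof (rule injI)
    fix h1 h2 assume eq: "(\<lambda>g. intg (K*h1*g)) = (\<lambda>g. intg (K*h2*g))"
    obtain c1 where c1: "h1 = (\<Sum>m\<in>II. scl (c1 m) (bas m))" using expand by blast
    obtain c2 where c2: "h2 = (\<Sum>m\<in>II. scl (c2 m) (bas m))" using expand by blast
    have "\<And>m. m \<in> II \<Longrightarrow> c1 m = c2 m"
    proof -
      fix m assume m: "m \<in> II"
      have "c1 m = intg (K*h1*dual m)" using coeff[OF c1 m] Bphi by simp
      also have "\<dots> = intg (K*h2*dual m)" using fun_cong[OF eq, of "dual m"] by simp
      also have "\<dots> = c2 m" using coeff[OF c2 m] Bphi by simp
      finally show "c1 m = c2 m" .
    qed
    then show "h1 = h2" unfolding c1 c2 by (intro sum.cong) auto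
  qed
  have img: "range (\<lambda>h g. intg (K*h*g)) = {f. Vector_Spaces.linear scl (*) f}"
  proof
    show "range (\<lambda>h g. intg (K*h*g)) \<subseteq> {f. Vector_Spaces.linear scl (*) f}" using lin1 by auto
  next
    show "{f. Vector_Spaces.linear scl (*) f} \<subseteq> range (\<lambda>h g. intg (K*h*g))"
    proof
      fix f assume "f \<in> {f. Vector_Spaces.linear scl (*) f}"
      then have lf: "Vector_Spaces.linear scl (*) f" by simp
      define a where "a = (\<Sum>m\<in>II. scl (f (bas m)) (dual m))"
      have ab: "intg (K*a*bas m') = f (bas m')" if m': "m' \<in> II" for m'
      proof -
        have "intg (K*a*bas m') = (\<Sum>m\<in>II. f (bas m) * intg (K*dual m*bas m'))"
          unfolding a_def by (rule lin_sum[OF lin2 fin_II])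
        also have "\<dots> = (\<Sum>m\<in>II. if m = m' then f (bas m) else 0)"
          by (intro sum.cong refl) (auto simp: Bphi pair2 m')
        also have "\<dots> = f (bas m')" using m' fin_II by simp
        finally show ?thesis .
      qed
      have "(\<lambda>g. intg (K*a*g)) = f"
      proof
        fix g
        obtain c where c: "g = (\<Sum>m\<in>II. scl (c m) (bas m))" using expand by blast
        have "intg (K*a*g) = (\<Sum>m\<in>II. c m * intg (K*a*bas m))"
          unfolding c by (rule lin_sum[OF lin1 fin_II])
        also have "\<dots> = (\<Sum>m\<in>II. c m * f (bas m))"
          by (intro sum.cong refl) (simp add: ab)
        also have "\<dots> = f g" unfolding c by (rule lin_sum[OF lf fin_II, symmetric])
        finally show "intg (K*a*g) = f g" .
      qed
      then show "f \<in> range (\<lambda>h g. intg (K*h*g))" by blast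
    qed
  qed
  have "frobenius_form scl (\<lambda>h g. intg (K*h*g))"
    unfolding frobenius_form_def bij_betw_def
    using lin1 lin2 inj img by (simp add: mult.assoc)
  then show ?thesis using sym by blast
qed

end

theorem mainTheorem6:
  fixes n :: nat and q :: complex
    and scl :: "complex \<Rightarrow> 'a::ring_1 \<Rightarrow> 'a"
    and K E F :: 'a
    and intg :: "'a \<Rightarrow> complex"
  assumes n2: "n \<ge> 2"
    and prim: "primitive_root_of_unity n q"
    and alg: "complex_algebra scl"
    and relK: "K ^ n = 1"
    and relE: "E ^ n = 0"
    and relF: "F ^ n = 0"
    and relEK: "E * K = scl q (K * E)"
    and relFK: "F * K = scl (inverse q) (K * F)"
    and relEF: "E * F - F * E = scl (1 / (q - inverse q)) (K - K ^ (n - 1))"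
    and basis_inj: "inj_on (\<lambda>(i, j, k). K ^ i * F ^ j * E ^ k) ({..<n} \<times> {..<n} \<times> {..<n})"
    and basis_indep: "\<not> module.dependent scl ((\<lambda>(i, j, k). K ^ i * F ^ j * E ^ k) ` ({..<n} \<times> {..<n} \<times> {..<n}))"
    and basis_span: "module.span scl ((\<lambda>(i, j, k). K ^ i * F ^ j * E ^ k) ` ({..<n} \<times> {..<n} \<times> {..<n})) = UNIV"
    and intg_lin: "Vector_Spaces.linear scl (*) intg"
    and intg_basis: "\<And>i j k. i < n \<Longrightarrow> j < n \<Longrightarrow> k < n \<Longrightarrow>
        intg (K ^ i * F ^ j * E ^ k) = (if i = 1 \<and> j = n - 1 \<and> k = n - 1 then 1 else 0)"
  shows "frobenius_form scl (\<lambda>h g. intg (K * h * g)) \<and> symmetric_form (\<lambda>h g. intg (K * h * g))"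
proof -
  have "uq n q scl K E F intg"
    unfolding uq_def using n2 prim alg relK relE relF relEK relFK relEF basis_inj basis_span intg_lin intg_basis
    by blast
  then show ?thesis by (rule uq.main)
qed

end
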